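(* Let $A$ be a meet-semilattice and $\kappa$ a regular cardinal. Then $A$ is a $\kappa$-frame if and only if $\mathcal{BL}_\kappa A=A$.
   Context: A meet-semilattice is a poset with all finite meets. An existing join $\bigvee S$ is distributive if $a\wedge\bigvee S=\bigvee\{a\wedge s:s\in S\}$ for all $a$. A D-ideal of $A$ is a downset containing $\bigvee S$ for each subset $S$ of it with distributive join; $\mathcal{BL} A$ is the frame of D-ideals ordered by inclusion, and $A$ is identified with the sub-meet-semilattice $\{{\downarrow}a:a\in A\}$ of $\mathcal{BL} A$. A $\kappa$-join is a join of fewer than $\kappa$ elements; $A$ is a $\kappa$-frame if all $\kappa$-joins exist in $A$ and are distributive. $\mathcal{BL}_\kappa A$ is the sub-$\kappa$-frame of $\mathcal{BL} A$ generated by $A$ (the smallest subset containing $A$ closed under finite meets and $\kappa$-joins computed in $\mathcal{BL} A$). *)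

theory Defs
  imports Main
begin

text \<open>A meet-semilattice (a poset with all finite meets, including the empty meet,
  i.e. a top element) is modelled by the type class bounded_semilattice_inf_top.
  The cardinal kappa is modelled by a cardinal order relation r on some type.\<close>

definition is_join :: "'a::order set \<Rightarrow> 'a \<Rightarrow> bool" where
  "is_join S j \<longleftrightarrow> (\<forall>s\<in>S. s \<le> j) \<and> (\<forall>u. (\<forall>s\<in>S. s \<le> u) \<longrightarrow> j \<le> u)"

definition distributive_join :: "'a::semilattice_inf set \<Rightarrow> bool" where
  "distributive_join S \<longleftrightarrow> (\<exists>j. is_join S j \<and> (\<forall>a. is_join ((\<lambda>s. inf a s) ` S) (inf a j)))"

definition D_ideal :: "'a::semilattice_inf set \<Rightarrow> bool" where
  "D_ideal I \<longleftrightarrow> (\<forall>x y. x \<in> I \<longrightarrow> y \<le> x \<longrightarrow> y \<in> I)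
     \<and> (\<forall>S j. S \<subseteq> I \<longrightarrow> distributive_join S \<longrightarrow> is_join S j \<longrightarrow> j \<in> I)"

definition BL :: "'a::semilattice_inf set set" where
  "BL = {I. D_ideal I}"

text \<open>The principal downset of a; A is identified with {principal a | a}.\<close>
definition principal :: "'a::order \<Rightarrow> 'a set" where
  "principal a = {x. x \<le> a}"

definition BL_join :: "'a::semilattice_inf set set \<Rightarrow> 'a set" where
  "BL_join F = \<Inter>{I. D_ideal I \<and> \<Union>F \<subseteq> I}"

definition kappa_frame :: "'k rel \<Rightarrow> 'a::semilattice_inf itself \<Rightarrow> bool" where
  "kappa_frame r _ \<longleftrightarrow> (\<forall>S::'a set. (card_of S, r) \<in> ordLess \<longrightarrow> distributive_join S)"

definition BL_kappa :: "'k rel \<Rightarrow> 'a::bounded_semilattice_inf_top set set" where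
  "BL_kappa r = \<Inter>{X. X \<subseteq> BL \<and> range principal \<subseteq> X \<and> UNIV \<in> X
      \<and> (\<forall>I\<in>X. \<forall>J\<in>X. I \<inter> J \<in> X)
      \<and> (\<forall>F. F \<subseteq> X \<longrightarrow> (card_of F, r) \<in> ordLess \<longrightarrow> BL_join F \<in> X)}"

end

theory Submission
  imports Defs
begin

lemma is_join_unique:
  fixes j :: "'a::order"
  shows "is_join S j \<Longrightarrow> is_join S j' \<Longrightarrow> j = j'"
  unfolding is_join_def by (meson antisym)

lemma D_ideal_principal: "D_ideal (principal (a::'a::semilattice_inf))"
  unfolding D_ideal_def principal_def is_join_def by (auto intro: order_trans)

lemma BL_join_least: "D_ideal I \<Longrightarrow> \<Union>F \<subseteq> I \<Longrightarrow> BL_join F \<subseteq> I"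
  unfolding BL_join_def by blast

lemma BL_join_upper: "\<Union>F \<subseteq> BL_join F"
  unfolding BL_join_def by blast

lemma principal_inj: "principal (a::'a::order) = principal b \<Longrightarrow> a = b"
  unfolding principal_def by (metis antisym mem_Collect_eq order_refl)

lemma principal_BL_join:
  fixes S :: "'a::semilattice_inf set"
  assumes "distributive_join S" "is_join S j"
  shows "BL_join (principal ` S) = principal j"
proof
  show "BL_join (principal ` S) \<subseteq> principal j"
    apply (rule BL_join_least[OF D_ideal_principal])
    using assms(2) unfolding principal_def is_join_def by (auto intro: order_trans)
next
  show "principal j \<subseteq> BL_join (principal ` S)"
  proof
    fix x assume x: "x \<in> principal j"
    have S: "S \<subseteq> BL_join (principal ` S)"
      using BL_join_upper[of "principal ` S"] unfolding principal_def by auto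
    have "\<forall>I. D_ideal I \<and> \<Union>(principal ` S) \<subseteq> I \<longrightarrow> x \<in> I"
    proof (intro allI impI)
      fix I assume I: "D_ideal I \<and> \<Union>(principal ` S) \<subseteq> I"
      have "S \<subseteq> I" using I unfolding principal_def by auto
      then have "j \<in> I" using I assms unfolding D_ideal_def by blast
      then show "x \<in> I" using I x unfolding D_ideal_def principal_def by blast
    qed
    then show "x \<in> BL_join (principal ` S)" unfolding BL_join_def by blast
  qed
qed

theorem theorem4p2:
  fixes r :: "'k rel"
  assumes "Cinfinite r" and "regularCard r"
  shows "kappa_frame r TYPE('a::bounded_semilattice_inf_top)
           \<longleftrightarrow> (BL_kappa r :: 'a set set) = range principal"
proof
  assume kf: "kappa_frame r TYPE('a)"
  let ?P = "range principal :: 'a set set"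
  have closed: "BL_join F \<in> ?P" if F: "F \<subseteq> ?P" "(card_of F, r) \<in> ordLess" for F
  proof -
    define S where "S = (\<lambda>P. SOME a. P = principal (a::'a)) ` F"
    have FS: "principal ` S = F"
    proof -
      have "principal (SOME a. P = principal a) = P" if "P \<in> F" for P
        using F(1) that by (metis (mono_tags, lifting) imageE subsetD someI_ex)
      then show ?thesis unfolding S_def by (force simp: image_image)
    qed
    have "(card_of S, r) \<in> ordLess"
      unfolding S_def using card_of_image F(2) ordLeq_ordLess_trans by blast
    then have dj: "distributive_join S" using kf unfolding kappa_frame_def by blast
    then obtain j where "is_join S j" unfolding distributive_join_def by blast
    then show ?thesis using principal_BL_join[OF dj] FS by auto
  qed
  have inX: "?P \<in> {X. X \<subseteq> BL \<and> range principal \<subseteq> X \<and> UNIV \<in> X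
      \<and> (\<forall>I\<in>X. \<forall>J\<in>X. I \<inter> J \<in> X)
      \<and> (\<forall>F. F \<subseteq> X \<longrightarrow> (card_of F, r) \<in> ordLess \<longrightarrow> BL_join F \<in> X)}"
  proof -
    have "?P \<subseteq> BL" unfolding BL_def using D_ideal_principal by auto
    moreover have "UNIV \<in> ?P"
    proof
      show "UNIV = principal (top::'a)" unfolding principal_def by auto
    qed auto
    moreover have "\<forall>I\<in>?P. \<forall>J\<in>?P. I \<inter> J \<in> ?P"
    proof (intro ballI)
      fix I J assume "I \<in> ?P" "J \<in> ?P"
      then obtain a b where "I = principal a" "J = principal b" by auto
      then have "I \<inter> J = principal (inf a b)" unfolding principal_def by auto
      then show "I \<inter> J \<in> ?P" by auto
    qed
    ultimately show ?thesis using closed by blast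
  qed
  show "(BL_kappa r :: 'a set set) = range principal"
  proof
    show "BL_kappa r \<subseteq> ?P" unfolding BL_kappa_def by (rule Inter_lower[OF inX])
    show "?P \<subseteq> BL_kappa r" unfolding BL_kappa_def by (rule Inter_greatest) simp
  qed
next
  assume eq: "(BL_kappa r :: 'a set set) = range principal"
  show "kappa_frame r TYPE('a)"
    unfolding kappa_frame_def
  proof (intro allI impI)
    fix S :: "'a set" assume S: "(card_of S, r) \<in> ordLess"
    let ?F = "principal ` S"
    have cF: "(card_of ?F, r) \<in> ordLess"
      using card_of_image S ordLeq_ordLess_trans by blast
    have "?F \<subseteq> BL_kappa r" using eq by auto
    then have "BL_join ?F \<in> BL_kappa r"
      unfolding BL_kappa_def
    proof (intro InterI)
      fix X :: "'a set set" assume FX: "?F \<subseteq> \<Inter>{X. X \<subseteq> BL \<and> range principal \<subseteq> X \<and> UNIV \<in> X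
      \<and> (\<forall>I\<in>X. \<forall>J\<in>X. I \<inter> J \<in> X)
      \<and> (\<forall>F. F \<subseteq> X \<longrightarrow> (card_of F, r) \<in> ordLess \<longrightarrow> BL_join F \<in> X)}"
        and X: "X \<in> {X. X \<subseteq> BL \<and> range principal \<subseteq> X \<and> UNIV \<in> X
      \<and> (\<forall>I\<in>X. \<forall>J\<in>X. I \<inter> J \<in> X)
      \<and> (\<forall>F. F \<subseteq> X \<longrightarrow> (card_of F, r) \<in> ordLess \<longrightarrow> BL_join F \<in> X)}"
      have "?F \<subseteq> X" using FX Inter_lower[OF X] by (rule subset_trans)
      moreover have "\<forall>F. F \<subseteq> X \<longrightarrow> (card_of F, r) \<in> ordLess \<longrightarrow> BL_join F \<in> X"
        using X unfolding mem_Collect_eq by (elim conjE) assumption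
      ultimately show "BL_join ?F \<in> X" using cF by blast
    qed
    then obtain j where j: "BL_join ?F = principal j" using eq by auto
    have jin: "j \<in> BL_join ?F" using j unfolding principal_def by auto
    have upper: "s \<le> j" if "s \<in> S" for s
    proof -
      have "s \<in> BL_join ?F" using BL_join_upper[of ?F] that unfolding principal_def by auto
      then show ?thesis using j unfolding principal_def by auto
    qed
    have dist: "is_join ((\<lambda>s. inf a s) ` S) (inf a j)" for a
      unfolding is_join_def
    proof (intro conjI allI impI ballI)
      fix x assume "x \<in> (\<lambda>s. inf a s) ` S"
      then show "x \<le> inf a j" using upper by (auto intro: le_infI2)
    next
      fix u assume u: "\<forall>x\<in>(\<lambda>s. inf a s) ` S. x \<le> u"
      define J where "J = {x. inf a x \<le> u}"
      have DJ: "D_ideal J"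
        unfolding D_ideal_def
      proof (intro conjI allI impI)
        fix x y assume "x \<in> J" "y \<le> x"
        then show "y \<in> J" unfolding J_def by (auto intro: order_trans[OF inf_mono[OF order_refl]])
      next
        fix T t assume T: "T \<subseteq> J" "distributive_join T" "is_join T t"
        then obtain t' where t': "is_join T t'" "is_join ((\<lambda>s. inf a s) ` T) (inf a t')"
          unfolding distributive_join_def by blast
        have "t' = t" using is_join_unique T(3) t'(1) by blast
        then show "t \<in> J" using t'(2) T(1) unfolding J_def is_join_def by auto
      qed
      have "\<Union>?F \<subseteq> J"
      proof
        fix x assume "x \<in> \<Union>?F"
        then obtain s where "s \<in> S" "x \<le> s" unfolding principal_def by auto
        then have "inf a x \<le> inf a s" "inf a s \<le> u" using u by (metis inf_mono order_refl, blast)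
        then show "x \<in> J" unfolding J_def using order_trans by blast
      qed
      then have "j \<in> J" using BL_join_least[OF DJ] jin by blast
      then show "inf a j \<le> u" unfolding J_def by auto
    qed
    have "is_join S j"
      unfolding is_join_def
    proof (intro conjI allI impI ballI)
      fix s assume "s \<in> S" then show "s \<le> j" by (rule upper)
    next
      fix u assume u: "\<forall>s\<in>S. s \<le> u"
      have "BL_join ?F \<subseteq> principal u"
        by (rule BL_join_least[OF D_ideal_principal]) (use u in \<open>auto simp: principal_def intro: order_trans\<close>)
      then show "j \<le> u" using jin unfolding principal_def by auto
    qed
    then show "distributive_join S" unfolding distributive_join_def using dist by blast
  qed
qed

end
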